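(* Let $m\ge1$, $n\ge1$, $N>2n$, let $\Sigma_0,\dots,\Sigma_n\in\mathbb R^{m\times m}$, and let $\mathbf T_n$ be the $(n+1)m\times(n+1)m$ block-Toeplitz matrix whose $(i,j)$ block ($i,j=0,\dots,n$) is $\Sigma_{i-j}$ if $i\ge j$ and $\Sigma_{j-i}^\top$ if $i<j$. Consider the maximum entropy problem (MEP): minimize $-\log\det\boldsymbol\Sigma$ over symmetric positive definite $mN\times mN$ matrices $\boldsymbol\Sigma$ subject to $E_n^\top\boldsymbol\Sigma E_n=\mathbf T_n$ and $\mathbf U_N^\top\boldsymbol\Sigma\mathbf U_N=\boldsymbol\Sigma$. Let $\boldsymbol\Sigma^o_N$ be a minimizer of (MEP). Then $(\boldsymbol\Sigma^o_N)^{-1}$ is a symmetric block-circulant matrix which is banded of bandwidth $n$. Hence $\boldsymbol\Sigma_N^o$ is the covariance matrix of a stationary reciprocal process of order $n$ on $\mathbb Z_N$.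
   Context: $E_n$ is the $mN\times m(n+1)$ matrix consisting of $N\times(n+1)$ blocks of size $m\times m$ whose $(i,i)$ blocks ($i=1,\dots,n+1$) are $I_m$ and all other blocks are $0$; thus $E_n^\top\boldsymbol\Sigma E_n$ is the upper-left $(n+1)\times(n+1)$ block corner of $\boldsymbol\Sigma$. $\mathbf U_N$ is the $mN\times mN$ block-circulant shift matrix whose $(i,i+1)$ blocks ($i=1,\dots,N-1$) and $(N,1)$ block equal $I_m$ and all other blocks are $0$; a matrix $\boldsymbol\Sigma$ is block-circulant (its $(i,j)$ block depends only on $(i-j)\bmod N$) iff $\mathbf U_N^\top\boldsymbol\Sigma\mathbf U_N=\boldsymbol\Sigma$. A block-circulant matrix is banded of bandwidth $n$ if its $(i,j)$ block is zero whenever the cyclic distance $\min\{(i-j)\bmod N,(j-i)\bmod N\}$ exceeds $n$. A process on $\mathbb Z_N$ is an $m$-dimensional zero-mean second-order process $\{\mathbf y(t)\}_{t=1}^N$ with time indices taken mod $N$ and symmetric block-circulant covariance $\mathbb E\,\mathbf y\mathbf y^\top$ (such a process is called stationary). Writing $\hat{\mathbb E}[\cdot\mid\cdot]$ for orthogonal projection onto the closed linear span of the scalar components of the conditioning variables, subspaces $\mathcal A,\mathcal B$ are conditionally orthogonal given $\mathcal C$ if $(a-\hat{\mathbb E}[a\mid\mathcal C])$ and $(b-\hat{\mathbb E}[b\mid\mathcal C])$ are uncorrelated for all $a\in\mathcal A,b\in\mathcal B$. The process is reciprocal of order $n$ if for every (cyclic) interval $(t_1,t_2)$ the variables $\{\mathbf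 y(t):t\in(t_1,t_2)\}$ are conditionally orthogonal to $\{\mathbf y(s): s\notin(t_1,t_2)\}$ given $\mathbf y(t_1-n+1),\dots,\mathbf y(t_1),\mathbf y(t_2),\dots,\mathbf y(t_2+n-1)$. *)

theory Defs
  imports "Jordan_Normal_Form.Determinant" "Jordan_Normal_Form.Gauss_Jordan_Elimination"
begin

text \<open>Conventions: time indices and block indices are 0-based, t = 0..N-1 (the paper
uses 1..N).  Row/column k of an mN x mN matrix belongs to block k div m, component k mod m.\<close>

definition sym_mat :: "real mat \<Rightarrow> bool" where
  "sym_mat A \<longleftrightarrow> transpose_mat A = A"

definition pos_def :: "nat \<Rightarrow> real mat \<Rightarrow> bool" where
  "pos_def d A \<longleftrightarrow> A \<in> carrier_mat d d \<and> sym_mat A \<and>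
     (\<forall>v \<in> carrier_vec d. v \<noteq> 0\<^sub>v d \<longrightarrow> v \<bullet> (A *\<^sub>v v) > 0)"

definition pos_semidef :: "nat \<Rightarrow> real mat \<Rightarrow> bool" where
  "pos_semidef d A \<longleftrightarrow> A \<in> carrier_mat d d \<and> sym_mat A \<and>
     (\<forall>v \<in> carrier_vec d. v \<bullet> (A *\<^sub>v v) \<ge> 0)"

definition block_toeplitz :: "nat \<Rightarrow> nat \<Rightarrow> (nat \<Rightarrow> real mat) \<Rightarrow> real mat" where
  "block_toeplitz m n Sig = mat ((n+1)*m) ((n+1)*m) (\<lambda>(r,c).
     let i = r div m; a = r mod m; j = c div m; b = c mod m in
     if j \<le> i then Sig (i - j) $$ (a, b) else Sig (j - i) $$ (b, a))"

definition E_mat :: "nat \<Rightarrow> nat \<Rightarrow> nat \<Rightarrow> real mat" where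
  "E_mat m N n = mat (m*N) (m*(n+1)) (\<lambda>(r,c).
     if r div m = c div m \<and> r mod m = c mod m then 1 else 0)"

definition U_mat :: "nat \<Rightarrow> nat \<Rightarrow> real mat" where
  "U_mat m N = mat (m*N) (m*N) (\<lambda>(r,c).
     if c div m = (r div m + 1) mod N \<and> c mod m = r mod m then 1 else 0)"

definition block_circulant :: "nat \<Rightarrow> nat \<Rightarrow> real mat \<Rightarrow> bool" where
  "block_circulant m N A \<longleftrightarrow> transpose_mat (U_mat m N) * A * U_mat m N = A"

definition cyc_dist :: "nat \<Rightarrow> nat \<Rightarrow> nat \<Rightarrow> nat" where
  "cyc_dist N i j = min (nat ((int i - int j) mod int N)) (nat ((int j - int i) mod int N))"

definition banded :: "nat \<Rightarrow> nat \<Rightarrow> nat \<Rightarrow> real mat \<Rightarrow> bool" where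
  "banded m N n A \<longleftrightarrow> (\<forall>r < m*N. \<forall>c < m*N.
      cyc_dist N (r div m) (c div m) > n \<longrightarrow> A $$ (r, c) = 0)"

definition MEP_feasible :: "nat \<Rightarrow> nat \<Rightarrow> nat \<Rightarrow> (nat \<Rightarrow> real mat) \<Rightarrow> real mat \<Rightarrow> bool" where
  "MEP_feasible m N n Sig S \<longleftrightarrow> pos_def (m*N) S \<and>
     transpose_mat (E_mat m N n) * S * E_mat m N n = block_toeplitz m n Sig \<and>
     transpose_mat (U_mat m N) * S * U_mat m N = S"

definition MEP_minimizer :: "nat \<Rightarrow> nat \<Rightarrow> nat \<Rightarrow> (nat \<Rightarrow> real mat) \<Rightarrow> real mat \<Rightarrow> bool" where
  "MEP_minimizer m N n Sig S \<longleftrightarrow> MEP_feasible m N n Sig S \<and>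
     (\<forall>S'. MEP_feasible m N n Sig S' \<longrightarrow> - ln (det S) \<le> - ln (det S'))"

text \<open>Second-order process described through its covariance Sigma (mN x mN):
 the Hilbert space spanned by the scalar components y_a(t) is identified with
 coefficient vectors u \<in> R^{mN}, with inner product E[(u^T y)(v^T y)] = u^T Sigma v.
 The span of {y(t) : t \<in> T} is the set of vectors supported on blocks in T.\<close>
definition span_times :: "nat \<Rightarrow> nat \<Rightarrow> nat set \<Rightarrow> real vec set" where
  "span_times m N T = {u \<in> carrier_vec (m*N). \<forall>k < m*N. k div m \<notin> T \<longrightarrow> u $ k = 0}"

definition cov_inner :: "real mat \<Rightarrow> real vec \<Rightarrow> real vec \<Rightarrow> real" where
  "cov_inner S u v = u \<bullet> (S *\<^sub>v v)"

text \<open>Conditional orthogonality of span(A) and span(B) given span(C):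
 if p is an orthogonal projection of a onto span(C) and q of b, then the residuals are
 uncorrelated.\<close>
definition cond_orth :: "nat \<Rightarrow> nat \<Rightarrow> real mat \<Rightarrow> nat set \<Rightarrow> nat set \<Rightarrow> nat set \<Rightarrow> bool" where
  "cond_orth m N S A B C \<longleftrightarrow>
    (\<forall>u \<in> span_times m N A. \<forall>v \<in> span_times m N B.
     \<forall>p \<in> span_times m N C. \<forall>q \<in> span_times m N C.
       (\<forall>w \<in> span_times m N C. cov_inner S (u - p) w = 0) \<longrightarrow>
       (\<forall>w \<in> span_times m N C. cov_inner S (v - q) w = 0) \<longrightarrow>
       cov_inner S (u - p) (v - q) = 0)"

text \<open>Cyclic open interval (t1,t2) = {t1+1, ..., t2-1} mod N; for t1 = t2 it is
 {t1+1, ..., t1+N-1} mod N.\<close>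
definition cyc_open :: "nat \<Rightarrow> nat \<Rightarrow> nat \<Rightarrow> nat set" where
  "cyc_open N t1 t2 = (let d = (t2 + N - t1 - 1) mod N + 1 in
     {(t1 + k) mod N | k. 0 < k \<and> k < d})"

definition cyc_boundary :: "nat \<Rightarrow> nat \<Rightarrow> nat \<Rightarrow> nat \<Rightarrow> nat set" where
  "cyc_boundary N n t1 t2 =
     {nat ((int t1 - int k) mod int N) | k. k < n} \<union> {(t2 + k) mod N | k. k < n}"

definition reciprocal :: "nat \<Rightarrow> nat \<Rightarrow> nat \<Rightarrow> real mat \<Rightarrow> bool" where
  "reciprocal m N n S \<longleftrightarrow> (\<forall>t1 < N. \<forall>t2 < N.
     cond_orth m N S (cyc_open N t1 t2) ({..<N} - cyc_open N t1 t2) (cyc_boundary N n t1 t2))"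

definition stationary_reciprocal_cov :: "nat \<Rightarrow> nat \<Rightarrow> nat \<Rightarrow> real mat \<Rightarrow> bool" where
  "stationary_reciprocal_cov m N n S \<longleftrightarrow>
     pos_semidef (m*N) S \<and> block_circulant m N S \<and> reciprocal m N n S"

end

theory Submission
  imports Defs
begin


lemma coeff_prod_lin:
  fixes c e :: "nat \<Rightarrow> real"
  assumes "finite F"
  shows "coeff (\<Prod>i\<in>F. [:c i, e i:]) 0 = (\<Prod>i\<in>F. c i) \<and>
         coeff (\<Prod>i\<in>F. [:c i, e i:]) 1 = (\<Sum>k\<in>F. e k * (\<Prod>i\<in>F-{k}. c i))"
  using assms
proof (induction F rule: finite_induct)
  case empty
  then show ?case by simp
next
  case (insert x F)
  have s: "(\<Sum>k\<in>insert x F. e k * (\<Prod>i\<in>insert x F-{k}. c i))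
     = e x * (\<Prod>i\<in>F. c i) + c x * (\<Sum>k\<in>F. e k * (\<Prod>i\<in>F-{k}. c i))"
  proof -
    have "(\<Sum>k\<in>insert x F. e k * (\<Prod>i\<in>insert x F-{k}. c i)) = e x * (\<Prod>i\<in>insert x F-{x}. c i) + (\<Sum>k\<in>F. e k * (\<Prod>i\<in>insert x F-{k}. c i))"
      using insert by simp
    also have "(\<Prod>i\<in>insert x F-{x}. c i) = (\<Prod>i\<in>F. c i)" using insert
      by (metis Diff_insert_absorb)
    also have "(\<Sum>k\<in>F. e k * (\<Prod>i\<in>insert x F-{k}. c i)) = (\<Sum>k\<in>F. e k * (c x * (\<Prod>i\<in>F-{k}. c i)))"
    proof (rule sum.cong[OF refl])
      fix k assume k: "k \<in> F"
      have "insert x F - {k} = insert x (F - {k})" using k insert by auto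
      then show "e k * (\<Prod>i\<in>insert x F-{k}. c i) = e k * (c x * (\<Prod>i\<in>F-{k}. c i))"
        using insert by simp
    qed
    finally show ?thesis by (simp add: sum_distrib_left algebra_simps)
  qed
  have p: "(\<Prod>i\<in>insert x F. [:c i, e i:]) = [:c x, e x:] * (\<Prod>i\<in>F. [:c i, e i:])"
    using insert by simp
  show ?case unfolding p s using insert.IH insert.hyps
    by (simp add: coeff_mult algebra_simps)
qed



lemma perm_fix_all:
  fixes d k :: nat
  assumes p: "p permutes {0..<d}" and k: "k < d"
    and fx: "\<forall>i\<in>{0..<d}-{k}. p i = i"
  shows "p = id"
proof -
  have pk: "p k = k"
  proof (rule ccontr)
    assume ne: "p k \<noteq> k"
    have "k \<in> {0..<d}" using k by simp
    then have "p k \<in> {0..<d}" using permutes_in_image[OF p] by blast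
    then have "p (p k) = p k" using fx ne by auto
    then have "p k = k" using permutes_inj[OF p] by (meson injD)
    then show False using ne by simp
  qed
  show ?thesis
  proof
    fix i show "p i = id i"
      using fx pk p by (cases "i \<in> {0..<d}") (auto simp: permutes_not_in)
  qed
qed

lemma det_poly:
  fixes A :: "real mat"
  assumes A: "A \<in> carrier_mat d d"
  shows "\<exists>P. (\<forall>t. poly P t = det (1\<^sub>m d + t \<cdot>\<^sub>m A)) \<and> coeff P 1 = (\<Sum>i<d. A $$ (i,i))"
proof -
  let ?c = "\<lambda>p i. (if p i = i then 1 else 0) :: real"
  let ?e = "\<lambda>p i. A $$ (i, p i)"
  define P where "P = (\<Sum>p\<in>{p. p permutes {0..<d}}. smult (signof p) (\<Prod>i\<in>{0..<d}. [:?c p i, ?e p i:]))"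
  have fin: "finite {p. p permutes {0..<d}}" by (simp add: finite_permutations)
  have "poly P t = det (1\<^sub>m d + t \<cdot>\<^sub>m A)" for t
  proof -
    have B: "1\<^sub>m d + t \<cdot>\<^sub>m A \<in> carrier_mat d d" using A by simp
    have "poly P t = (\<Sum>p\<in>{p. p permutes {0..<d}}. signof p * (\<Prod>i\<in>{0..<d}. ?c p i + t * ?e p i))"
      unfolding P_def by (simp add: poly_sum poly_prod)
    also have "\<dots> = det (1\<^sub>m d + t \<cdot>\<^sub>m A)"
      unfolding det_def'[OF B]
    proof (rule sum.cong[OF refl])
      fix p assume "p \<in> {p. p permutes {0..<d}}"
      then have p: "p permutes {0..<d}" by simp
      have "(\<Prod>i\<in>{0..<d}. ?c p i + t * ?e p i) = (\<Prod>i\<in>{0..<d}. (1\<^sub>m d + t \<cdot>\<^sub>m A) $$ (i, p i))"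
      proof (rule prod.cong[OF refl])
        fix i assume i: "i \<in> {0..<d}"
        then have "p i < d" using p by (simp add: permutes_in_image)
        then show "?c p i + t * ?e p i = (1\<^sub>m d + t \<cdot>\<^sub>m A) $$ (i, p i)"
          using i A by auto
      qed
      then show "signof p * (\<Prod>i\<in>{0..<d}. ?c p i + t * ?e p i) = signof p * (\<Prod>i\<in>{0..<d}. (1\<^sub>m d + t \<cdot>\<^sub>m A) $$ (i, p i))"
        by simp
    qed
    finally show ?thesis .
  qed
  moreover have "coeff P 1 = (\<Sum>i<d. A $$ (i,i))"
  proof -
    have "coeff P 1 = (\<Sum>p\<in>{p. p permutes {0..<d}}. signof p * (\<Sum>k\<in>{0..<d}. ?e p k * (\<Prod>i\<in>{0..<d}-{k}. ?c p i)))"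
      unfolding P_def coeff_sum coeff_smult using coeff_prod_lin[of "{0..<d}"] by simp
    also have "\<dots> = (\<Sum>p\<in>{p. p permutes {0..<d}}. if p = id then (\<Sum>k<d. A $$ (k,k)) else 0)"
    proof (rule sum.cong[OF refl])
      fix p assume "p \<in> {p. p permutes {0..<d}}"
      then have p: "p permutes {0..<d}" by simp
      show "signof p * (\<Sum>k\<in>{0..<d}. ?e p k * (\<Prod>i\<in>{0..<d}-{k}. ?c p i)) = (if p = id then (\<Sum>k<d. A $$ (k,k)) else 0)"
      proof (cases "p = id")
        case True
        then show ?thesis by (simp add: atLeast0LessThan)
      next
        case False
        have z: "(\<Prod>i\<in>{0..<d}-{k}. ?c p i) = 0" if k: "k \<in> {0..<d}" for k
        proof -
          have "\<not> (\<forall>i\<in>{0..<d}-{k}. p i = i)" using perm_fix_all[OF p, of k] k False by auto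
          then obtain i where "i \<in> {0..<d}-{k}" "p i \<noteq> i" by blast
          then show ?thesis by (intro prod_zero) auto
        qed
        have "(\<Sum>k\<in>{0..<d}. ?e p k * (\<Prod>i\<in>{0..<d}-{k}. ?c p i)) = 0"
        proof (rule sum.neutral, rule ballI)
          fix k assume "k \<in> {0..<d}"
          then show "?e p k * (\<Prod>i\<in>{0..<d}-{k}. ?c p i) = 0" using z[of k] by (simp only: mult_zero_right)
        qed
        then show ?thesis using False by simp
      qed
    qed
    also have "\<dots> = (\<Sum>k<d. A $$ (k,k))"
      using fin by (simp add: sum.delta' permutes_id)
    finally show ?thesis .
  qed
  ultimately show ?thesis by blast
qed



lemma mv_entry:
  assumes "A \<in> carrier_mat d d" "w \<in> carrier_vec d" "i < d"
  shows "(A *\<^sub>v w) $ i = (\<Sum>j<d. A $$ (i,j) * w $ j)"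
  using assms by (simp add: scalar_prod_def atLeast0LessThan)

lemma sp_mv:
  assumes "A \<in> carrier_mat d d" "w \<in> carrier_vec d" "v \<in> carrier_vec d"
  shows "v \<bullet> (A *\<^sub>v w) = (\<Sum>i<d. v $ i * (\<Sum>j<d. A $$ (i,j) * w $ j))"
  using assms by (simp add: scalar_prod_def atLeast0LessThan)

lemma sp_self: "(v :: real vec) \<in> carrier_vec d \<Longrightarrow> v \<bullet> v = (\<Sum>i<d. (v $ i)^2)"
  unfolding scalar_prod_def by (simp add: atLeast0LessThan power2_eq_square)

lemma quad_bound:
  fixes A :: "real mat"
  assumes A: "A \<in> carrier_mat d d" and v: "v \<in> carrier_vec d"
  shows "\<bar>v \<bullet> (A *\<^sub>v v)\<bar> \<le> (\<Sum>i<d. \<Sum>j<d. \<bar>A $$ (i,j)\<bar>) * (v \<bullet> v)"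
proof -
  let ?s = "\<Sum>i<d. (v $ i)^2"
  have sq: "(v $ i)^2 \<le> ?s" if "i < d" for i
    using that by (intro member_le_sum) auto
  have pr: "\<bar>v $ i\<bar> * \<bar>v $ j\<bar> \<le> ?s" if "i < d" "j < d" for i j
  proof -
    have "\<bar>v $ i\<bar> * \<bar>v $ j\<bar> \<le> max ((v $ i)^2) ((v $ j)^2)"
    proof (cases "\<bar>v $ i\<bar> \<le> \<bar>v $ j\<bar>")
      case True
      then have "\<bar>v $ i\<bar> * \<bar>v $ j\<bar> \<le> \<bar>v $ j\<bar> * \<bar>v $ j\<bar>" by (rule mult_right_mono[OF _ abs_ge_zero])
      then show ?thesis by (metis abs_mult_self_eq power2_eq_square max.coboundedI2)
    next
      case False
      then have "\<bar>v $ i\<bar> * \<bar>v $ j\<bar> \<le> \<bar>v $ i\<bar> * \<bar>v $ i\<bar>" by (intro mult_left_mono) auto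
      then show ?thesis by (metis abs_mult_self_eq power2_eq_square max.coboundedI1)
    qed
    then show ?thesis using sq[OF that(1)] sq[OF that(2)] by (meson max.bounded_iff order_trans)
  qed
  have "v \<bullet> (A *\<^sub>v v) = (\<Sum>i<d. \<Sum>j<d. v $ i * A $$ (i,j) * v $ j)"
    using sp_mv[OF A v v] by (simp add: sum_distrib_left mult.assoc)
  then have "\<bar>v \<bullet> (A *\<^sub>v v)\<bar> = \<bar>\<Sum>i<d. \<Sum>j<d. v $ i * A $$ (i,j) * v $ j\<bar>" by simp
  also have "\<dots> \<le> (\<Sum>i<d. \<bar>\<Sum>j<d. v $ i * A $$ (i,j) * v $ j\<bar>)" by (rule sum_abs)
  also have "\<dots> \<le> (\<Sum>i<d. \<Sum>j<d. \<bar>v $ i * A $$ (i,j) * v $ j\<bar>)" by (intro sum_mono sum_abs)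
  also have "\<dots> \<le> (\<Sum>i<d. \<Sum>j<d. \<bar>A $$ (i,j)\<bar> * ?s)"
  proof (intro sum_mono)
    fix i j assume "i \<in> {..<d}" "j \<in> {..<d}"
    then have "\<bar>v $ i\<bar> * \<bar>v $ j\<bar> \<le> ?s" using pr by auto
    then have "\<bar>A $$ (i,j)\<bar> * (\<bar>v $ i\<bar> * \<bar>v $ j\<bar>) \<le> \<bar>A $$ (i,j)\<bar> * ?s"
      by (simp add: mult_left_mono)
    then show "\<bar>v $ i * A $$ (i,j) * v $ j\<bar> \<le> \<bar>A $$ (i,j)\<bar> * ?s"
      by (simp add: abs_mult algebra_simps)
  qed
  also have "\<dots> = (\<Sum>i<d. \<Sum>j<d. \<bar>A $$ (i,j)\<bar>) * (v \<bullet> v)"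
    using sp_self[OF v] by (simp add: sum_distrib_right)
  finally show ?thesis .
qed

lemma det_nonzero_posquad:
  fixes M :: "real mat"
  assumes M: "M \<in> carrier_mat d d"
    and pq: "\<forall>v\<in>carrier_vec d. v \<noteq> 0\<^sub>v d \<longrightarrow> v \<bullet> (M *\<^sub>v v) > 0"
  shows "det M \<noteq> 0"
proof
  assume "det M = 0"
  then obtain v where v: "v \<in> carrier_vec d" "v \<noteq> 0\<^sub>v d" "M *\<^sub>v v = 0\<^sub>v d"
    using det_0_iff_vec_prod_zero[OF M] by blast
  then have "v \<bullet> (M *\<^sub>v v) = 0" by simp
  then show False using pq v by auto
qed

lemma pos_def_det_pos:
  assumes pd: "pos_def d S"
  shows "det S > 0"
proof -
  have S: "S \<in> carrier_mat d d" using pd unfolding pos_def_def by auto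
  define A where "A = S - 1\<^sub>m d"
  have A: "A \<in> carrier_mat d d" using S unfolding A_def by (simp add: minus_carrier_mat)
  obtain P where P: "\<And>t. poly P t = det (1\<^sub>m d + t \<cdot>\<^sub>m A)"
    using det_poly[OF A] by blast
  have "1\<^sub>m d + 0 \<cdot>\<^sub>m A = 1\<^sub>m d" using A by (intro eq_matI) auto
  then have P0: "poly P 0 = 1" using P[of 0] by simp
  have S1: "1\<^sub>m d + 1 \<cdot>\<^sub>m A = S" unfolding A_def using S by (intro eq_matI) auto
  have P1: "poly P 1 = det S" using P[of 1] S1 by simp
  have nz: "poly P s \<noteq> 0" if s: "0 \<le> s" "s \<le> 1" for s
  proof -
    let ?M = "1\<^sub>m d + s \<cdot>\<^sub>m A"
    have M: "?M \<in> carrier_mat d d" using A by simp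
    have "\<forall>v\<in>carrier_vec d. v \<noteq> 0\<^sub>v d \<longrightarrow> v \<bullet> (?M *\<^sub>v v) > 0"
    proof (intro ballI impI)
      fix v :: "real vec" assume v: "v \<in> carrier_vec d" "v \<noteq> 0\<^sub>v d"
      have vv: "v \<bullet> v > 0"
      proof -
        obtain i where i: "i < d" "v $ i \<noteq> 0" using v by (metis eq_vecI carrier_vecD index_zero_vec)
        have "(v $ i)^2 \<le> (\<Sum>i<d. (v $ i)^2)" using i by (intro member_le_sum) auto
        moreover have "(v $ i)^2 > 0" using i by simp
        ultimately show ?thesis using sp_self[OF v(1)] by linarith
      qed
      have vS: "v \<bullet> (S *\<^sub>v v) > 0" using pd v unfolding pos_def_def by auto
      have "v \<bullet> (?M *\<^sub>v v) = (\<Sum>i<d. v $ i * (\<Sum>j<d. ?M $$ (i,j) * v $ j))"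
        using sp_mv[OF M v(1) v(1)] .
      also have "\<dots> = (\<Sum>i<d. v $ i * (\<Sum>j<d. ((1-s) * (if i = j then 1 else 0) + s * S $$ (i,j)) * v $ j))"
      proof (rule sum.cong[OF refl])
        fix i assume i: "i \<in> {..<d}"
        have "?M $$ (i,j) = (1-s) * (if i = j then 1 else 0) + s * S $$ (i,j)" if j: "j < d" for j
          using A S i j unfolding A_def by (cases "i = j") (simp_all add: algebra_simps)
        then show "v $ i * (\<Sum>j<d. ?M $$ (i,j) * v $ j) = v $ i * (\<Sum>j<d. ((1-s) * (if i = j then 1 else 0) + s * S $$ (i,j)) * v $ j)"
          by simp
      qed
      also have "\<dots> = (\<Sum>i<d. (1-s)*(v $ i)^2 + s*(v $ i * (\<Sum>j<d. S $$ (i,j) * v $ j)))"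
      proof (rule sum.cong[OF refl])
        fix i assume i: "i \<in> {..<d}"
        have e: "((1-s)*(if i=j then 1 else 0) + s*S $$ (i,j)) * v $ j = (if i = j then (1-s)* v $ j else 0) + s*(S $$ (i,j) * v $ j)" for j
          by (cases "i = j") (simp_all add: algebra_simps)
        have "(\<Sum>j<d. ((1-s)*(if i=j then 1 else 0) + s*S $$ (i,j)) * v $ j) = (\<Sum>j<d. (if i = j then (1-s)* v $ j else 0)) + s*(\<Sum>j<d. S $$ (i,j) * v $ j)"
          unfolding e by (simp only: sum.distrib sum_distrib_left)
        also have "(\<Sum>j<d. (if i = j then (1-s)* v $ j else 0)) = (1-s) * v $ i" using i by simp
        finally have inner: "(\<Sum>j<d. ((1-s)*(if i=j then 1 else 0) + s*S $$ (i,j)) * v $ j) = (1-s) * v $ i + s*(\<Sum>j<d. S $$ (i,j) * v $ j)" .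
        show "v $ i * (\<Sum>j<d. ((1-s)*(if i=j then 1 else 0) + s*S $$ (i,j)) * v $ j) = (1-s)*(v $ i)^2 + s*(v $ i * (\<Sum>j<d. S $$ (i,j) * v $ j))"
          unfolding inner by (simp add: power2_eq_square algebra_simps)
      qed
      also have "\<dots> = (1 - s) * (\<Sum>i<d. (v $ i)^2) + s * (\<Sum>i<d. v $ i * (\<Sum>j<d. S $$ (i,j) * v $ j))"
        by (simp only: sum.distrib sum_distrib_left)
      also have "\<dots> = (1 - s) * (v \<bullet> v) + s * (v \<bullet> (S *\<^sub>v v))"
        using sp_self[OF v(1)] sp_mv[OF S v(1) v(1)] by simp
      finally have eq: "v \<bullet> (?M *\<^sub>v v) = (1 - s) * (v \<bullet> v) + s * (v \<bullet> (S *\<^sub>v v))" .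
      show "v \<bullet> (?M *\<^sub>v v) > 0"
      proof (cases "s = 0")
        case True then show ?thesis using eq vv by simp
      next
        case False
        then have "s * (v \<bullet> (S *\<^sub>v v)) > 0" using s vS by simp
        moreover have "(1 - s) * (v \<bullet> v) \<ge> 0" using s vv by simp
        ultimately show ?thesis using eq by linarith
      qed
    qed
    then have "det ?M \<noteq> 0" using det_nonzero_posquad[OF M] by blast
    then show ?thesis using P by simp
  qed
  show ?thesis
  proof (rule ccontr)
    assume "\<not> det S > 0"
    then have "poly P 1 \<le> 0" using P1 by simp
    moreover have "0 \<le> poly P 0" using P0 by simp
    moreover have "continuous_on {0..1} (poly P)" by (intro continuous_intros)
    ultimately obtain x where "0 \<le> x" "x \<le> 1" "poly P x = 0"
      using IVT2'[of "poly P" 1 0 0] by auto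
    then show False using nz by blast
  qed
qed



lemma sandwich:
  fixes A X B :: "real mat"
  assumes A: "A \<in> carrier_mat d d1" and X: "X \<in> carrier_mat d d" and B: "B \<in> carrier_mat d d2"
    and xy: "x < d1" "y < d2" "f x < d" "g y < d"
    and Ae: "\<forall>p<d. A $$ (p,x) = (if p = f x then 1 else 0)"
    and Be: "\<forall>q<d. B $$ (q,y) = (if q = g y then 1 else 0)"
  shows "(transpose_mat A * X * B) $$ (x,y) = X $$ (f x, g y)"
proof -
  have inner: "(\<Sum>z<d. X $$ (p,z) * B $$ (z,y)) = X $$ (p, g y)" for p
  proof -
    have "(\<Sum>z<d. X $$ (p,z) * B $$ (z,y)) = (\<Sum>z<d. if z = g y then X $$ (p,z) else 0)"
      using Be by (intro sum.cong) auto
    also have "\<dots> = X $$ (p, g y)" using xy by simp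
    finally show ?thesis .
  qed
  have "(transpose_mat A * X * B) $$ (x,y) = (\<Sum>p<d. A $$ (p,x) * (\<Sum>z<d. X $$ (p,z) * B $$ (z,y)))"
    using A X B xy by (simp add: scalar_prod_def atLeast0LessThan)
  also have "\<dots> = (\<Sum>p<d. if p = f x then X $$ (p, g y) else 0)"
    unfolding inner using Ae by (intro sum.cong) auto
  also have "\<dots> = X $$ (f x, g y)" using xy by simp
  finally show ?thesis .
qed

definition rho :: "nat \<Rightarrow> nat \<Rightarrow> nat \<Rightarrow> nat" where
  "rho m N x = ((x div m + 1) mod N) * m + x mod m"
definition pii :: "nat \<Rightarrow> nat \<Rightarrow> nat \<Rightarrow> nat" where
  "pii m N x = ((x div m + N - 1) mod N) * m + x mod m"

lemma blk_div: "b < m \<Longrightarrow> (q * m + b) div m = q" and blk_mod: "b < m \<Longrightarrow> (q * m + b) mod m = b"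
  for q b m :: nat by simp_all

lemma blk_lt: "q < N \<Longrightarrow> b < m \<Longrightarrow> q * m + b < m * N" for q b m N :: nat
proof -
  assume "q < N" "b < m"
  then have "q * m + b < q * m + m" by simp
  also have "\<dots> = (q + 1) * m" by simp
  also have "\<dots> \<le> N * m" using \<open>q < N\<close> by (intro mult_right_mono) auto
  finally show ?thesis by (simp add: mult.commute)
qed

lemma div_lt_N: "x < m * N \<Longrightarrow> x div m < N" for x m N :: nat
  by (metis div_less_iff_less_mult mult.commute mult_zero_left not_less_zero zero_less_iff_neq_zero)

lemma eq_by_divmod: "(x::nat) = y \<longleftrightarrow> x div m = y div m \<and> x mod m = y mod m"
  by (metis div_mult_mod_eq)

context
  fixes m N :: nat
  assumes m: "m \<ge> 1" and N: "N \<ge> 1"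
begin

lemma rho_div: "rho m N x div m = (x div m + 1) mod N" and rho_mod: "rho m N x mod m = x mod m"
  using m unfolding rho_def by simp_all

lemma pii_div: "pii m N x div m = (x div m + N - 1) mod N" and pii_mod: "pii m N x mod m = x mod m"
  using m unfolding pii_def by simp_all

lemma rho_lt: "rho m N x < m * N"
  unfolding rho_def using m N by (intro blk_lt) auto

lemma pii_lt: "pii m N x < m * N"
  unfolding pii_def using m N by (intro blk_lt) auto

lemma rho_pii: "x < m * N \<Longrightarrow> rho m N (pii m N x) = x"
proof -
  assume x: "x < m * N"
  have q: "x div m < N" using div_lt_N[OF x] .
  have "((x div m + N - 1) mod N + 1) mod N = x div m"
  proof (cases "x div m = 0")
    case True
    then show ?thesis using N by (simp add: mod_if)
  next
    case False
    then have "(x div m + N - 1) mod N = x div m - 1"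
      using q by (metis Nat.add_diff_assoc2 add_diff_cancel_left' le_add1 less_imp_diff_less mod_add_self2 mod_less nat_diff_split_asm not_gr_zero One_nat_def le_eq_less_or_eq leI Suc_leI add_diff_assoc)
    then show ?thesis using False q by simp
  qed
  then show ?thesis
    by (subst eq_by_divmod[of _ _ m]) (simp add: rho_div rho_mod pii_div pii_mod)
qed

lemma pii_rho: "x < m * N \<Longrightarrow> pii m N (rho m N x) = x"
proof -
  assume x: "x < m * N"
  have q: "x div m < N" using div_lt_N[OF x] .
  have "((x div m + 1) mod N + N - 1) mod N = x div m"
  proof (cases "x div m + 1 = N")
    case True
    then show ?thesis using N by simp
  next
    case False
    then have "(x div m + 1) mod N = x div m + 1" using q by simp
    then show ?thesis using q by simp
  qed
  then show ?thesis
    by (subst eq_by_divmod[of _ _ m]) (simp add: rho_div rho_mod pii_div pii_mod)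
qed

lemma U_entry:
  assumes p: "p < m * N" and x: "x < m * N"
  shows "U_mat m N $$ (p, x) = (if p = pii m N x then 1 else 0)"
proof -
  have "(x div m = (p div m + 1) mod N \<and> x mod m = p mod m) \<longleftrightarrow> x = rho m N p"
    by (subst eq_by_divmod[of x _ m]) (simp add: rho_div rho_mod)
  also have "\<dots> \<longleftrightarrow> p = pii m N x"
    using pii_rho[OF p] rho_pii[OF x] by auto
  finally show ?thesis unfolding U_mat_def using p x by simp
qed

lemma U_carrier: "U_mat m N \<in> carrier_mat (m*N) (m*N)"
  unfolding U_mat_def by simp

lemma U_sandwich:
  assumes X: "X \<in> carrier_mat (m*N) (m*N)" and x: "x < m*N" and y: "y < m*N"
  shows "(transpose_mat (U_mat m N) * X * U_mat m N) $$ (x,y) = X $$ (pii m N x, pii m N y)"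
  by (rule sandwich[OF U_carrier X U_carrier x y pii_lt pii_lt]) (use U_entry x y in auto)

lemma circ_iff:
  assumes X: "X \<in> carrier_mat (m*N) (m*N)"
  shows "transpose_mat (U_mat m N) * X * U_mat m N = X \<longleftrightarrow>
    (\<forall>x<m*N. \<forall>y<m*N. X $$ (rho m N x, rho m N y) = X $$ (x, y))"
proof
  assume h: "transpose_mat (U_mat m N) * X * U_mat m N = X"
  show "\<forall>x<m*N. \<forall>y<m*N. X $$ (rho m N x, rho m N y) = X $$ (x, y)"
  proof (intro allI impI)
    fix x y assume x: "x < m*N" and y: "y < m*N"
    have "X $$ (rho m N x, rho m N y) = (transpose_mat (U_mat m N) * X * U_mat m N) $$ (rho m N x, rho m N y)"
      using h by simp
    also have "\<dots> = X $$ (x, y)"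
      using U_sandwich[OF X rho_lt rho_lt] pii_rho[OF x] pii_rho[OF y] by simp
    finally show "X $$ (rho m N x, rho m N y) = X $$ (x, y)" .
  qed
next
  assume h: "\<forall>x<m*N. \<forall>y<m*N. X $$ (rho m N x, rho m N y) = X $$ (x, y)"
  show "transpose_mat (U_mat m N) * X * U_mat m N = X"
  proof (rule eq_matI)
    fix x y assume x: "x < dim_row X" and y: "y < dim_col X"
    then have x': "x < m*N" and y': "y < m*N" using X by auto
    have "(transpose_mat (U_mat m N) * X * U_mat m N) $$ (x,y) = X $$ (pii m N x, pii m N y)"
      using U_sandwich[OF X x' y'] .
    also have "\<dots> = X $$ (rho m N (pii m N x), rho m N (pii m N y))"
      using h pii_lt by simp
    also have "\<dots> = X $$ (x, y)" using rho_pii[OF x'] rho_pii[OF y'] by simp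
    finally show "(transpose_mat (U_mat m N) * X * U_mat m N) $$ (x,y) = X $$ (x, y)" .
  qed (use X U_carrier in auto)
qed

end

lemma E_entry:
  assumes "p < m * N" "x < m * (n+1)"
  shows "E_mat m N n $$ (p, x) = (if p = x then 1 else 0)"
proof -
  have "(p div m = x div m \<and> p mod m = x mod m) \<longleftrightarrow> p = x" using eq_by_divmod[of p x m] by simp
  then show ?thesis using assms unfolding E_mat_def by simp
qed



lemma sp_sum: "a \<in> carrier_vec d \<Longrightarrow> b \<in> carrier_vec d \<Longrightarrow> a \<bullet> b = (\<Sum>i<d. a $ i * b $ i)"
  by (simp add: scalar_prod_def atLeast0LessThan)

lemma pd_lower:
  fixes S K :: "real mat"
  assumes pd: "pos_def d S" and K: "K \<in> carrier_mat d d" and SK: "S * K = 1\<^sub>m d"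
  shows "\<exists>c>0. \<forall>v\<in>carrier_vec d. c * (v \<bullet> v) \<le> v \<bullet> (S *\<^sub>v v)"
proof -
  have S: "S \<in> carrier_mat d d" and symS: "transpose_mat S = S"
    using pd unfolding pos_def_def sym_mat_def by auto
  define M where "M = (\<Sum>i<d. \<Sum>j<d. \<bar>K $$ (i,j)\<bar>) + 1"
  have "0 \<le> (\<Sum>i<d. \<Sum>j<d. \<bar>K $$ (i,j)\<bar>)" by (intro sum_nonneg) auto
  then have M0: "M > 0" unfolding M_def by linarith
  define l where "l = 1 / M"
  have l0: "l > 0" using M0 unfolding l_def by simp
  have "1/M * (v \<bullet> v) \<le> v \<bullet> (S *\<^sub>v v)" if v: "v \<in> carrier_vec d" for v
  proof -
    define w where "w = K *\<^sub>v v"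
    have w: "w \<in> carrier_vec d" unfolding w_def using K v by simp
    define x where "x = v - l \<cdot>\<^sub>v w"
    have x: "x \<in> carrier_vec d" unfolding x_def using v w by simp
    have Sw: "S *\<^sub>v w = v" unfolding w_def
      using assoc_mult_mat_vec[OF S K v, symmetric] SK v by simp
    have Sx: "S *\<^sub>v x = S *\<^sub>v v - l \<cdot>\<^sub>v v"
      unfolding x_def using mult_minus_distrib_mat_vec[OF S v, of "l \<cdot>\<^sub>v w"] w Sw
        mult_mat_vec[OF S w] by simp
    have nn: "0 \<le> x \<bullet> (S *\<^sub>v x)"
    proof (cases "x = 0\<^sub>v d")
      case True then show ?thesis using S by simp
    next
      case False then show ?thesis using pd x unfolding pos_def_def by (auto intro: less_imp_le)
    qed
    have vv: "v \<bullet> v \<ge> 0" using sp_self[OF v] by (simp add: sum_nonneg)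
    have wSv: "w \<bullet> (S *\<^sub>v v) = v \<bullet> v"
      using transpose_vec_mult_scalar[OF S v w] symS Sw by simp
    have wv: "w \<bullet> v = v \<bullet> (K *\<^sub>v v)" unfolding w_def using comm_scalar_prod[OF _ v, of "K *\<^sub>v v"] K v by simp
    have vKv: "v \<bullet> (K *\<^sub>v v) \<le> M * (v \<bullet> v)"
    proof -
      have "v \<bullet> (K *\<^sub>v v) \<le> (\<Sum>i<d. \<Sum>j<d. \<bar>K $$ (i,j)\<bar>) * (v \<bullet> v)"
        using quad_bound[OF K v] by simp
      also have "\<dots> \<le> M * (v \<bullet> v)" unfolding M_def using vv by (simp add: distrib_right)
      finally show ?thesis .
    qed
    let ?Sv = "S *\<^sub>v v"
    have Svc: "?Sv \<in> carrier_vec d" using S v by simp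
    have xi: "x $ i = v $ i - l * w $ i" if "i < d" for i unfolding x_def using v w that by simp
    have "x \<bullet> (S *\<^sub>v x) = (\<Sum>i<d. x $ i * (?Sv - l \<cdot>\<^sub>v v) $ i)"
      unfolding Sx using Svc v by (simp add: scalar_prod_def atLeast0LessThan)
    also have "\<dots> = (\<Sum>i<d. (v $ i - l * w $ i) * (?Sv $ i - l * v $ i))"
      using xi v Svc by (intro sum.cong) auto
    also have "\<dots> = (\<Sum>i<d. v $ i * ?Sv $ i) - l * (\<Sum>i<d. v $ i * v $ i) - l * (\<Sum>i<d. w $ i * ?Sv $ i)
        + l^2 * (\<Sum>i<d. w $ i * v $ i)"
    proof -
      have e: "(v $ i - l * w $ i) * (?Sv $ i - l * v $ i) = v $ i * ?Sv $ i - l * (v $ i * v $ i) - l * (w $ i * ?Sv $ i)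
        + l^2 * (w $ i * v $ i)" for i
        by (simp add: algebra_simps power2_eq_square)
      show ?thesis unfolding e by (simp only: sum.distrib sum_subtractf sum_distrib_left)
    qed
    also have "\<dots> = v \<bullet> ?Sv - l * (v \<bullet> v) - l * (w \<bullet> ?Sv) + l^2 * (w \<bullet> v)"
      by (simp only: sp_sum[OF v Svc] sp_sum[OF v v] sp_sum[OF w Svc] sp_sum[OF w v])
    finally have "0 \<le> v \<bullet> ?Sv - 2 * l * (v \<bullet> v) + l^2 * (v \<bullet> (K *\<^sub>v v))"
      using nn wSv wv by simp
    moreover have "l^2 * (v \<bullet> (K *\<^sub>v v)) \<le> l^2 * (M * (v \<bullet> v))"
      using vKv by (simp add: mult_left_mono)
    moreover have "l^2 * (M * (v \<bullet> v)) = l * (v \<bullet> v)" unfolding l_def using M0 by (simp add: power2_eq_square)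
    ultimately show ?thesis unfolding l_def by simp
  qed
  then show ?thesis using M0 by (intro exI[of _ "1/M"]) auto
qed

lemma smult_mat_vec_eq:
  fixes A :: "real mat"
  assumes "A \<in> carrier_mat d d" "v \<in> carrier_vec d"
  shows "(t \<cdot>\<^sub>m A) *\<^sub>v v = t \<cdot>\<^sub>v (A *\<^sub>v v)"
  using assms by (intro eq_vecI) (auto simp: scalar_prod_def sum_distrib_left mult.assoc)

lemma pd_perturb:
  fixes S K D :: "real mat"
  assumes pd: "pos_def d S" and K: "K \<in> carrier_mat d d" and SK: "S * K = 1\<^sub>m d"
    and D: "D \<in> carrier_mat d d" and symD: "sym_mat D"
  shows "\<exists>\<delta>>0. \<forall>t. \<bar>t\<bar> < \<delta> \<longrightarrow> pos_def d (S + t \<cdot>\<^sub>m D)"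
proof -
  have S: "S \<in> carrier_mat d d" and symS: "sym_mat S"
    using pd unfolding pos_def_def by auto
  obtain c where c: "c > 0" "\<forall>v\<in>carrier_vec d. c * (v \<bullet> v) \<le> v \<bullet> (S *\<^sub>v v)"
    using pd_lower[OF pd K SK] by blast
  define M where "M = (\<Sum>i<d. \<Sum>j<d. \<bar>D $$ (i,j)\<bar>) + 1"
  have "0 \<le> (\<Sum>i<d. \<Sum>j<d. \<bar>D $$ (i,j)\<bar>)" by (intro sum_nonneg) auto
  then have M0: "M > 0" unfolding M_def by linarith
  have "pos_def d (S + t \<cdot>\<^sub>m D)" if t: "\<bar>t\<bar> < c / M" for t
    unfolding pos_def_def
  proof (intro conjI ballI impI)
    show "S + t \<cdot>\<^sub>m D \<in> carrier_mat d d" using S D by simp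
    show "sym_mat (S + t \<cdot>\<^sub>m D)" unfolding sym_mat_def
    proof (rule eq_matI)
      fix i j assume ij: "i < dim_row (S + t \<cdot>\<^sub>m D)" "j < dim_col (S + t \<cdot>\<^sub>m D)"
      then have i: "i < d" and j: "j < d" using S D by auto
      have "S $$ (j,i) = S $$ (i,j)" using symS S i j unfolding sym_mat_def
        by (metis carrier_matD index_transpose_mat(1))
      moreover have "D $$ (j,i) = D $$ (i,j)" using symD D i j unfolding sym_mat_def
        by (metis carrier_matD index_transpose_mat(1))
      ultimately show "transpose_mat (S + t \<cdot>\<^sub>m D) $$ (i, j) = (S + t \<cdot>\<^sub>m D) $$ (i, j)"
        using S D i j by simp
    qed (use S D in auto)
  next
    fix v :: "real vec" assume v: "v \<in> carrier_vec d" "v \<noteq> 0\<^sub>v d"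
    have vv: "v \<bullet> v > 0"
    proof -
      obtain i where i: "i < d" "v $ i \<noteq> 0" using v by (metis eq_vecI carrier_vecD index_zero_vec)
      have "(v $ i)^2 \<le> (\<Sum>i<d. (v $ i)^2)" using i by (intro member_le_sum) auto
      moreover have "(v $ i)^2 > 0" using i by simp
      ultimately show ?thesis using sp_self[OF v(1)] by linarith
    qed
    have eq: "v \<bullet> ((S + t \<cdot>\<^sub>m D) *\<^sub>v v) = v \<bullet> (S *\<^sub>v v) + t * (v \<bullet> (D *\<^sub>v v))"
    proof -
      have "(S + t \<cdot>\<^sub>m D) *\<^sub>v v = S *\<^sub>v v + t \<cdot>\<^sub>v (D *\<^sub>v v)"
        using add_mult_distrib_mat_vec[OF S _ v(1), of "t \<cdot>\<^sub>m D"] D v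
        by (simp add: smult_mat_vec_eq)
      then show ?thesis using S D v scalar_prod_add_distrib[OF v(1), of "S *\<^sub>v v" "t \<cdot>\<^sub>v (D *\<^sub>v v)"]
        by simp
    qed
    have b: "\<bar>v \<bullet> (D *\<^sub>v v)\<bar> \<le> M * (v \<bullet> v)"
      using quad_bound[OF D v(1)] vv unfolding M_def by (simp add: distrib_right)
    have "\<bar>t * (v \<bullet> (D *\<^sub>v v))\<bar> \<le> \<bar>t\<bar> * (M * (v \<bullet> v))"
      unfolding abs_mult using b by (simp add: mult_left_mono)
    also have "\<dots> < c / M * (M * (v \<bullet> v))"
      using t vv M0 by (intro mult_strict_right_mono) auto
    also have "\<dots> = c * (v \<bullet> v)" using M0 by simp
    finally have "\<bar>t * (v \<bullet> (D *\<^sub>v v))\<bar> < c * (v \<bullet> v)" .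
    moreover have "c * (v \<bullet> v) \<le> v \<bullet> (S *\<^sub>v v)" using c v by auto
    ultimately show "v \<bullet> ((S + t \<cdot>\<^sub>m D) *\<^sub>v v) > 0" unfolding eq by linarith
  qed
  then show ?thesis using c M0 by (intro exI[of _ "c/M"]) auto
qed



lemma sym_entry: "sym_mat A \<Longrightarrow> A \<in> carrier_mat d d \<Longrightarrow> i < d \<Longrightarrow> j < d \<Longrightarrow> A $$ (j,i) = A $$ (i,j)"
  unfolding sym_mat_def by (metis carrier_matD index_transpose_mat(1))

lemma inverse_props:
  fixes S :: "real mat"
  assumes m: "m \<ge> 1" and N: "N \<ge> 1"
    and pd: "pos_def (m*N) S"
    and circ: "transpose_mat (U_mat m N) * S * U_mat m N = S"
  shows "\<exists>K. K \<in> carrier_mat (m*N) (m*N) \<and> S * K = 1\<^sub>m (m*N) \<and> K * S = 1\<^sub>m (m*N) \<and>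
     sym_mat K \<and> transpose_mat (U_mat m N) * K * U_mat m N = K"
proof -
  let ?d = "m*N"
  let ?U = "U_mat m N"
  have S: "S \<in> carrier_mat ?d ?d" and symS: "transpose_mat S = S"
    using pd unfolding pos_def_def sym_mat_def by auto
  have dS: "det S \<noteq> 0" using pos_def_det_pos[OF pd] by simp
  obtain K where K: "K \<in> carrier_mat ?d ?d" and KS: "K * S = 1\<^sub>m ?d" and SK: "S * K = 1\<^sub>m ?d"
    using det_non_zero_imp_unit[OF S dS, of undefined] unfolding Units_def ring_mat_def by auto
  have KT: "transpose_mat K \<in> carrier_mat ?d ?d" using K by simp
  have "transpose_mat K * S = 1\<^sub>m ?d"
    using arg_cong[OF SK, of transpose_mat] transpose_mult[OF S K] symS by simp
  then have "transpose_mat K = K"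
    using assoc_mult_mat[OF KT S K] SK right_mult_one_mat[OF KT] left_mult_one_mat[OF K] by simp
  then have symK: "sym_mat K" unfolding sym_mat_def .
  have U: "?U \<in> carrier_mat ?d ?d" using U_carrier[OF m N] .
  have UT: "transpose_mat ?U \<in> carrier_mat ?d ?d" using U by simp
  have UTU: "transpose_mat ?U * ?U = 1\<^sub>m ?d"
  proof -
    have "transpose_mat ?U * 1\<^sub>m ?d * ?U = 1\<^sub>m ?d"
    proof (rule eq_matI)
      fix x y assume "x < dim_row (1\<^sub>m ?d)" "y < dim_col (1\<^sub>m ?d)"
      then have x: "x < ?d" and y: "y < ?d" by auto
      have "(transpose_mat ?U * 1\<^sub>m ?d * ?U) $$ (x,y) = 1\<^sub>m ?d $$ (pii m N x, pii m N y)"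
        using U_sandwich[OF m N _ x y] by simp
      also have "\<dots> = 1\<^sub>m ?d $$ (x, y)"
        using pii_lt[OF m N] x y rho_pii[OF m N x] rho_pii[OF m N y] by (metis index_one_mat(1))
      finally show "(transpose_mat ?U * 1\<^sub>m ?d * ?U) $$ (x,y) = 1\<^sub>m ?d $$ (x, y)" .
    qed (use U in auto)
    then show ?thesis using right_mult_one_mat[OF UT] by simp
  qed
  have UUT: "?U * transpose_mat ?U = 1\<^sub>m ?d"
    using mat_mult_left_right_inverse[OF UT U UTU] .
  define K' where "K' = transpose_mat ?U * K * ?U"
  have K': "K' \<in> carrier_mat ?d ?d" unfolding K'_def using U K by simp
  have "K' * S = transpose_mat ?U * K * ?U * (transpose_mat ?U * S * ?U)"
    unfolding K'_def using circ by simp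
  also have "\<dots> = transpose_mat ?U * (K * ((?U * transpose_mat ?U) * (S * ?U)))"
    using U UT K S by (simp add: assoc_mult_mat[of _ ?d ?d _ ?d _ ?d])
  also have "\<dots> = transpose_mat ?U * ?U"
    unfolding UUT using U UT K S KS
    by (simp add: left_mult_one_mat assoc_mult_mat[of _ ?d ?d _ ?d _ ?d, symmetric])
  also have "\<dots> = 1\<^sub>m ?d" using UTU .
  finally have K'S: "K' * S = 1\<^sub>m ?d" .
  have "K' = K' * (S * K)" using SK right_mult_one_mat[OF K'] by simp
  also have "\<dots> = K" using assoc_mult_mat[OF K' S K, symmetric] K'S left_mult_one_mat[OF K] by simp
  finally have "transpose_mat ?U * K * ?U = K" unfolding K'_def .
  then show ?thesis using K SK KS symK by blast
qed



lemma cyc_k: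
  fixes i j N n :: nat
  assumes i: "i < N" and j: "j < N" and cd: "n < cyc_dist N i j"
  defines "k \<equiv> nat ((int j - int i) mod int N)"
  shows "k < N \<and> (i + k) mod N = j \<and> n < k \<and> k + n < N"
proof -
  have N0: "N > 0" using i by simp
  have c1: "n < nat ((int i - int j) mod int N)" and c2: "n < k"
    using cd unfolding cyc_dist_def k_def by auto
  show ?thesis
  proof (cases "i \<le> j")
    case True
    have "(int j - int i) mod int N = int j - int i" using True j by (intro mod_pos_pos_trivial) auto
    then have kk: "k = j - i" unfolding k_def using True by simp
    have "i \<noteq> j" using c1 by auto
    then have ij: "i < j" using True by simp
    have "(int i - int j) mod int N = int i - int j + int N"
    proof -
      have "(int i - int j) mod int N = (int i - int j + int N) mod int N" by simp
      also have "\<dots> = int i - int j + int N" using ij j by (intro mod_pos_pos_trivial) auto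
      finally show ?thesis .
    qed
    then have "nat ((int i - int j) mod int N) = N - (j - i)" using True j by simp
    then show ?thesis using kk c1 c2 True j by auto
  next
    case False
    have "(int j - int i) mod int N = int j - int i + int N"
    proof -
      have "(int j - int i) mod int N = (int j - int i + int N) mod int N" by simp
      also have "\<dots> = int j - int i + int N" using False i by (intro mod_pos_pos_trivial) auto
      finally show ?thesis .
    qed
    then have kk: "k = N + j - i" unfolding k_def using False i by simp
    have "(int i - int j) mod int N = int i - int j" using False i by (intro mod_pos_pos_trivial) auto
    then have "nat ((int i - int j) mod int N) = i - j" using False by simp
    moreover have "(i + (N + j - i)) mod N = j" using False i j by simp
    ultimately show ?thesis using kk c1 c2 False i by auto
  qed
qed

definition sig :: "nat \<Rightarrow> nat \<Rightarrow> nat \<Rightarrow> nat \<Rightarrow> nat \<Rightarrow> nat" where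
  "sig m N k b y = ((y div m + k) mod N) * m + b"

lemma mod_suc_cancel:
  fixes a b N :: nat
  assumes N: "N \<ge> 1"
  shows "(a + 1) mod N = (b + 1) mod N \<longleftrightarrow> a mod N = b mod N"
proof
  assume h: "(a + 1) mod N = (b + 1) mod N"
  have "(a + 1 + (N - 1)) mod N = (b + 1 + (N - 1)) mod N"
    using h by (metis mod_add_left_eq)
  then show "a mod N = b mod N" using N by simp
next
  assume "a mod N = b mod N"
  then show "(a + 1) mod N = (b + 1) mod N" by (metis mod_add_left_eq)
qed

lemma sig_rho:
  assumes m: "m \<ge> 1" and N: "N \<ge> 1" and b: "b < m" and x: "x < m*N"
  shows "(rho m N x = sig m N k b (rho m N y)) \<longleftrightarrow> (x = sig m N k b y)"
proof -
  have u: "x div m < N" using div_lt_N[OF x] .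
  have "(rho m N x = sig m N k b (rho m N y)) \<longleftrightarrow>
     ((x div m + 1) mod N = ((y div m + 1) mod N + k) mod N \<and> x mod m = b)"
    using eq_by_divmod[of "rho m N x" "sig m N k b (rho m N y)" m] b
    by (simp add: rho_div[OF m N] rho_mod[OF m N] sig_def)
  also have "((y div m + 1) mod N + k) mod N = ((y div m + k) + 1) mod N"
    by (metis mod_add_left_eq add.commute add.left_commute)
  also have "((x div m + 1) mod N = ((y div m + k) + 1) mod N) \<longleftrightarrow> (x div m) mod N = (y div m + k) mod N"
    using mod_suc_cancel[OF N] by blast
  also have "(x div m) mod N = x div m" using u by simp
  also have "(x div m = (y div m + k) mod N \<and> x mod m = b) \<longleftrightarrow> x = sig m N k b y"
    using eq_by_divmod[of x "sig m N k b y" m] b by (simp add: sig_def)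
  finally show ?thesis .
qed

lemma sig_lt: "m \<ge> 1 \<Longrightarrow> N \<ge> 1 \<Longrightarrow> b < m \<Longrightarrow> sig m N k b y < m * N"
  unfolding sig_def by (intro blk_lt) auto

lemma sig_band:
  assumes m: "m \<ge> 1" and b: "b < m" and x: "x < m*(n+1)" and y: "y < m*(n+1)"
    and k: "n < k" "k + n < N"
  shows "y \<noteq> sig m N k b x"
proof
  assume h: "y = sig m N k b x"
  have xd: "x div m \<le> n" using x by (metis div_lt_N less_Suc_eq_le Suc_eq_plus1)
  have yd: "y div m \<le> n" using y by (metis div_lt_N less_Suc_eq_le Suc_eq_plus1)
  have "y div m = (x div m + k) mod N" using h b unfolding sig_def by simp
  also have "\<dots> = x div m + k" using xd k by (intro mod_less) auto
  finally show False using yd k by simp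
qed



lemma banded_entry:
  fixes S K :: "real mat"
  assumes m: "m \<ge> 1" and n: "n \<ge> 1" and Nn: "N > 2 * n"
    and opt: "MEP_minimizer m N n Sig S"
    and K: "K \<in> carrier_mat (m*N) (m*N)" and SK: "S * K = 1\<^sub>m (m*N)" and symK: "sym_mat K"
    and circK: "transpose_mat (U_mat m N) * K * U_mat m N = K"
    and r: "r < m*N" and c: "c < m*N" and cd: "n < cyc_dist N (r div m) (c div m)"
  shows "K $$ (r,c) = 0"
proof (rule ccontr)
  assume nz: "K $$ (r,c) \<noteq> 0"
  let ?d = "m*N"
  have N1: "N \<ge> 1" using Nn by simp
  have feas: "MEP_feasible m N n Sig S" using opt unfolding MEP_minimizer_def by simp
  then have pd: "pos_def ?d S" and ES: "transpose_mat (E_mat m N n) * S * E_mat m N n = block_toeplitz m n Sig"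
    and circS: "transpose_mat (U_mat m N) * S * U_mat m N = S"
    unfolding MEP_feasible_def by auto
  have S: "S \<in> carrier_mat ?d ?d" using pd unfolding pos_def_def by auto
  define a where "a = r mod m"
  define b where "b = c mod m"
  define i where "i = r div m"
  define j where "j = c div m"
  have a: "a < m" and b: "b < m" unfolding a_def b_def using m by auto
  have i: "i < N" and j: "j < N" unfolding i_def j_def using div_lt_N r c by auto
  define k where "k = nat ((int j - int i) mod int N)"
  have kprops: "k < N \<and> (i + k) mod N = j \<and> n < k \<and> k + n < N"
    using cyc_k[OF i j] cd unfolding k_def i_def j_def by blast
  define sg where "sg = sig m N k b"
  have sg_lt: "sg y < ?d" for y unfolding sg_def using sig_lt[OF m N1 b] .
  define pf where "pf = (\<lambda>y x. if y mod m = a \<and> x = sg y then (1::real) else 0)"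
  define D where "D = mat ?d ?d (\<lambda>(y,x). pf y x + pf x y)"
  have Dc: "D \<in> carrier_mat ?d ?d" unfolding D_def by simp
  have Dij: "D $$ (y,x) = pf y x + pf x y" if "y < ?d" "x < ?d" for x y
    unfolding D_def using that by simp
  have symD: "sym_mat D" unfolding sym_mat_def
    by (rule eq_matI) (auto simp: D_def)
  have pf_rho: "pf (rho m N y) (rho m N x) = pf y x" if "y < ?d" "x < ?d" for x y
    unfolding pf_def sg_def using sig_rho[OF m N1 b that(2), of k y] rho_mod[OF m N1, of y] by simp
  have Drho: "\<forall>x<?d. \<forall>y<?d. D $$ (rho m N x, rho m N y) = D $$ (x, y)"
    using Dij pf_rho rho_lt[OF m N1] by simp
  have circD: "transpose_mat (U_mat m N) * D * U_mat m N = D"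
    using circ_iff[OF m N1 Dc] Drho by blast
  have Dband: "D $$ (x,y) = 0" if "x < m*(n+1)" "y < m*(n+1)" for x y
  proof -
    have nN: "m*(n+1) \<le> ?d" using Nn by (intro mult_left_mono) auto
    have "pf x y = 0" unfolding pf_def sg_def using sig_band[OF m b that(1) that(2)] kprops by auto
    moreover have "pf y x = 0" unfolding pf_def sg_def using sig_band[OF m b that(2) that(1)] kprops by auto
    ultimately show ?thesis using Dij that nN by simp
  qed
  have Krho: "\<forall>x<?d. \<forall>y<?d. K $$ (rho m N x, rho m N y) = K $$ (x, y)"
    using circ_iff[OF m N1 K] circK by blast
  define f where "f = (\<lambda>t. K $$ ((t mod N) * m + a, ((t + k) mod N) * m + b))"
  have fS: "f (Suc t) = f t" for t
  proof -
    let ?p = "(t mod N) * m + a" and ?q = "((t + k) mod N) * m + b"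
    have p: "?p < ?d" and q: "?q < ?d" using a b N1 by (auto intro!: blk_lt)
    have "rho m N ?p = (Suc t mod N) * m + a"
      unfolding rho_def using a by (simp add: mod_Suc_eq)
    moreover have "rho m N ?q = ((Suc t + k) mod N) * m + b"
      unfolding rho_def using b by (simp add: mod_Suc_eq)
    ultimately show ?thesis unfolding f_def using Krho p q by metis
  qed
  have f0: "f t = f 0" for t by (induction t) (use fS in auto)
  have Kconst: "K $$ (z, sg z) = K $$ (r,c)" if z: "z < ?d" "z mod m = a" for z
  proof -
    have zd: "z div m < N" using div_lt_N z by auto
    have "z = ((z div m) mod N) * m + a" using zd z(2) by (metis div_mult_mod_eq mod_less)
    moreover have "sg z = ((z div m + k) mod N) * m + b" unfolding sg_def sig_def by simp
    ultimately have "K $$ (z, sg z) = f (z div m)" unfolding f_def by metis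
    also have "\<dots> = f i" using f0 by metis
    also have "f i = K $$ (r,c)"
    proof -
      have "r = (i mod N) * m + a" unfolding a_def i_def using i i_def by simp
      moreover have "c = ((i + k) mod N) * m + b" using kprops unfolding b_def j_def by simp
      ultimately show ?thesis unfolding f_def by simp
    qed
    finally show ?thesis .
  qed
  define A where "A = K * D"
  have Ac: "A \<in> carrier_mat ?d ?d" unfolding A_def using K Dc by simp
  define cnt where "cnt = (\<Sum>z<?d. if z mod m = a then (1::real) else 0)"
  have cnt: "cnt \<ge> 1"
  proof -
    have "(if r mod m = a then (1::real) else 0) \<le> cnt" unfolding cnt_def using r
      by (intro member_le_sum) auto
    then show ?thesis unfolding a_def by simp
  qed
  have tr: "(\<Sum>x<?d. A $$ (x,x)) = 2 * (K $$ (r,c) * cnt)"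
  proof -
    have "(\<Sum>x<?d. A $$ (x,x)) = (\<Sum>x<?d. \<Sum>z<?d. K $$ (x,z) * D $$ (z,x))"
      unfolding A_def using K Dc by (intro sum.cong) (auto simp: scalar_prod_def atLeast0LessThan)
    also have "\<dots> = (\<Sum>x<?d. \<Sum>z<?d. K $$ (x,z) * pf z x) + (\<Sum>x<?d. \<Sum>z<?d. K $$ (x,z) * pf x z)"
      using Dij by (simp add: distrib_left sum.distrib)
    also have "(\<Sum>x<?d. \<Sum>z<?d. K $$ (x,z) * pf x z) = (\<Sum>x<?d. if x mod m = a then K $$ (r,c) else 0)"
    proof (rule sum.cong[OF refl])
      fix x assume x: "x \<in> {..<?d}"
      have "(\<Sum>z<?d. K $$ (x,z) * pf x z) = (\<Sum>z<?d. if z = sg x then (if x mod m = a then K $$ (x,z) else 0) else 0)"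
        unfolding pf_def by (intro sum.cong) auto
      also have "\<dots> = (if x mod m = a then K $$ (x, sg x) else 0)" using sg_lt by simp
      also have "\<dots> = (if x mod m = a then K $$ (r,c) else 0)" using Kconst x by auto
      finally show "(\<Sum>z<?d. K $$ (x,z) * pf x z) = (if x mod m = a then K $$ (r,c) else 0)" .
    qed
    also have "(\<Sum>x<?d. \<Sum>z<?d. K $$ (x,z) * pf z x) = (\<Sum>z<?d. \<Sum>x<?d. K $$ (x,z) * pf z x)"
      by (rule sum.swap)
    also have "\<dots> = (\<Sum>z<?d. if z mod m = a then K $$ (r,c) else 0)"
    proof (rule sum.cong[OF refl])
      fix z assume z: "z \<in> {..<?d}"
      have "(\<Sum>x<?d. K $$ (x,z) * pf z x) = (\<Sum>x<?d. if x = sg z then (if z mod m = a then K $$ (x,z) else 0) else 0)"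
        unfolding pf_def by (intro sum.cong) auto
      also have "\<dots> = (if z mod m = a then K $$ (sg z, z) else 0)" using sg_lt by simp
      also have "\<dots> = (if z mod m = a then K $$ (r,c) else 0)"
        using Kconst z sym_entry[OF symK K, of "sg z" z] sg_lt by auto
      finally show "(\<Sum>x<?d. K $$ (x,z) * pf z x) = (if z mod m = a then K $$ (r,c) else 0)" .
    qed
    also have "(\<Sum>z<?d. if z mod m = a then K $$ (r,c) else 0) = K $$ (r,c) * cnt"
      unfolding cnt_def by (simp add: sum_distrib_left if_distrib cong: if_cong)
    finally show ?thesis by simp
  qed
  have trnz: "(\<Sum>x<?d. A $$ (x,x)) \<noteq> 0" using tr nz cnt by simp
  obtain P where P: "\<And>t. poly P t = det (1\<^sub>m ?d + t \<cdot>\<^sub>m A)" and P1: "coeff P 1 = (\<Sum>x<?d. A $$ (x,x))"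
    using det_poly[OF Ac] by blast
  have P0: "poly P 0 = 1"
  proof -
    have "1\<^sub>m ?d + 0 \<cdot>\<^sub>m A = 1\<^sub>m ?d" using Ac by (intro eq_matI) auto
    then show ?thesis using P[of 0] by simp
  qed
  have der: "DERIV (poly P) 0 :> coeff P 1"
    using poly_DERIV[of P 0] by (simp add: poly_0_coeff_0 coeff_pderiv)
  obtain \<delta> where \<delta>: "\<delta> > 0" "\<forall>t. \<bar>t\<bar> < \<delta> \<longrightarrow> pos_def ?d (S + t \<cdot>\<^sub>m D)"
    using pd_perturb[OF pd K SK Dc symD] by blast
  obtain t where t: "\<bar>t\<bar> < \<delta>" "poly P t > 1"
  proof (cases "coeff P 1 > 0")
    case True
    obtain e where e: "e > 0" "\<forall>h>0. h < e \<longrightarrow> poly P 0 < poly P (0 + h)"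
      using DERIV_pos_inc_right[OF der True] by blast
    define h where "h = min e \<delta> / 2"
    have "h > 0" "h < e" "h < \<delta>" unfolding h_def using e \<delta> by auto
    then show ?thesis using that[of h] e P0 by auto
  next
    case False
    then have neg: "coeff P 1 < 0" using trnz P1 by simp
    obtain e where e: "e > 0" "\<forall>h>0. h < e \<longrightarrow> poly P 0 < poly P (0 - h)"
      using DERIV_neg_dec_left[OF der neg] by blast
    define h where "h = min e \<delta> / 2"
    have "h > 0" "h < e" "h < \<delta>" unfolding h_def using e \<delta> by auto
    then show ?thesis using that[of "-h"] e P0 by auto
  qed
  define S' where "S' = S + t \<cdot>\<^sub>m D"
  have S'c: "S' \<in> carrier_mat ?d ?d" unfolding S'_def using S Dc by simp
  have pd': "pos_def ?d S'" unfolding S'_def using \<delta> t by auto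
  have E': "transpose_mat (E_mat m N n) * S' * E_mat m N n = block_toeplitz m n Sig"
  proof -
    have Ec: "E_mat m N n \<in> carrier_mat ?d (m*(n+1))" unfolding E_mat_def by simp
    have nN: "m*(n+1) \<le> ?d" using Nn by (intro mult_left_mono) auto
    have "transpose_mat (E_mat m N n) * S' * E_mat m N n = transpose_mat (E_mat m N n) * S * E_mat m N n"
    proof (rule eq_matI)
      fix x y assume "x < dim_row (transpose_mat (E_mat m N n) * S * E_mat m N n)"
        "y < dim_col (transpose_mat (E_mat m N n) * S * E_mat m N n)"
      then have x: "x < m*(n+1)" and y: "y < m*(n+1)" using Ec by auto
      have xd: "x < ?d" and yd: "y < ?d" using x y nN by auto
      have eS': "(transpose_mat (E_mat m N n) * S' * E_mat m N n) $$ (x,y) = S' $$ (x,y)"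
        by (rule sandwich[OF Ec S'c Ec x y, of "\<lambda>x. x" "\<lambda>x. x", simplified])
          (use E_entry xd yd x y in auto)
      have eS: "(transpose_mat (E_mat m N n) * S * E_mat m N n) $$ (x,y) = S $$ (x,y)"
        by (rule sandwich[OF Ec S Ec x y, of "\<lambda>x. x" "\<lambda>x. x", simplified])
          (use E_entry xd yd x y in auto)
      show "(transpose_mat (E_mat m N n) * S' * E_mat m N n) $$ (x,y) = (transpose_mat (E_mat m N n) * S * E_mat m N n) $$ (x,y)"
        unfolding eS eS' using Dband[OF x y] xd yd S Dc by (simp add: S'_def)
    qed (use Ec in auto)
    then show ?thesis using ES by simp
  qed
  have U': "transpose_mat (U_mat m N) * S' * U_mat m N = S'"
  proof -
    have "\<forall>x<?d. \<forall>y<?d. S $$ (rho m N x, rho m N y) = S $$ (x, y)"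
      using circ_iff[OF m N1 S] circS by blast
    then have "\<forall>x<?d. \<forall>y<?d. S' $$ (rho m N x, rho m N y) = S' $$ (x, y)"
      unfolding S'_def using Drho S Dc rho_lt[OF m N1] by simp
    then show ?thesis using circ_iff[OF m N1 S'c] by blast
  qed
  have feas': "MEP_feasible m N n Sig S'" unfolding MEP_feasible_def using pd' E' U' by blast
  have SA: "S' = S * (1\<^sub>m ?d + t \<cdot>\<^sub>m A)"
  proof -
    have "S * (1\<^sub>m ?d + t \<cdot>\<^sub>m A) = S * 1\<^sub>m ?d + S * (t \<cdot>\<^sub>m A)"
      using mult_add_distrib_mat[of S ?d ?d "1\<^sub>m ?d" ?d "t \<cdot>\<^sub>m A"] S Ac by simp
    also have "\<dots> = S + t \<cdot>\<^sub>m (S * A)" using right_mult_one_mat[OF S] mult_smult_distrib[OF S Ac] by simp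
    also have "S * A = D" unfolding A_def using assoc_mult_mat[OF S K Dc, symmetric] SK left_mult_one_mat[OF Dc] by simp
    finally show ?thesis unfolding S'_def by simp
  qed
  have dS: "det S > 0" using pos_def_det_pos[OF pd] .
  have "det S' = det S * poly P t" unfolding SA P using det_mult[OF S, of "1\<^sub>m ?d + t \<cdot>\<^sub>m A"] Ac by simp
  then have "det S' > det S" using t dS by simp
  then have "ln (det S) < ln (det S')" using dS by simp
  moreover have "- ln (det S) \<le> - ln (det S')" using opt feas' unfolding MEP_minimizer_def by blast
  ultimately show False by simp
qed



lemma f1: fixes t a b N :: nat assumes "N > 0"
  shows "(int ((t+b) mod N) - int ((t+a) mod N)) mod int N = (int b - int a) mod int N"
proof -
  have "(int ((t+b) mod N) - int ((t+a) mod N)) mod int N = (int (t+b) mod int N - int (t+a) mod int N) mod int N"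
    by (simp add: of_nat_mod)
  also have "\<dots> = (int (t+b) - int (t+a)) mod int N" by (simp add: mod_diff_eq)
  finally show ?thesis by simp
qed

lemma f4: fixes t1 t2 b N :: nat assumes "N > 0" "t1 < N" "t2 < N" "(t2 + N - t1) mod N \<le> b"
  shows "(t2 + (b - (t2 + N - t1) mod N)) mod N = (t1 + b) mod N"
proof -
  let ?D = "(t2 + N - t1) mod N"
  have "int ((t2 + (b - ?D)) mod N) = (int t2 + int b - int ?D) mod int N"
    using assms(4) by (simp add: of_nat_mod of_nat_diff)
  also have "int ?D = (int t2 + int N - int t1) mod int N" using assms(2) by (simp add: of_nat_mod of_nat_diff)
  also have "(int t2 + int b - (int t2 + int N - int t1) mod int N) mod int N = (int t2 + int b - (int t2 + int N - int t1)) mod int N"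
    by (simp add: mod_diff_right_eq)
  also have "int t2 + int b - (int t2 + int N - int t1) = (int t1 + int b) + (-1) * int N" by simp
  also have "((int t1 + int b) + (-1) * int N) mod int N = (int t1 + int b) mod int N" by (rule mod_mult_self1)
  also have "\<dots> = int ((t1 + b) mod N)" by (simp add: of_nat_mod)
  finally show ?thesis by simp
qed

lemma f5: fixes t1 t2 N :: nat assumes "N > 0" "t1 < N" "t2 < N" "t1 \<noteq> t2"
  shows "(t2 + N - t1 - 1) mod N + 1 = (t2 + N - t1) mod N"
proof (cases "t2 < t1")
  case True
  have a: "t2 + N - t1 < N" "1 \<le> t2 + N - t1" using True assms by auto
  then have "t2 + N - t1 - 1 < N" by simp
  then show ?thesis using a by simp
next
  case False
  then have lt: "t1 < t2" using assms by simp
  have e1: "t2 + N - t1 = (t2 - t1) + N" using lt by simp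
  have e2: "t2 + N - t1 - 1 = (t2 - t1 - 1) + N" using lt by simp
  have m1: "(t2 + N - t1) mod N = t2 - t1"
  proof -
    have "(t2 + N - t1) mod N = ((t2 - t1) + N) mod N" by (simp only: e1)
    also have "\<dots> = (t2 - t1) mod N" by (rule mod_add_self2)
    also have "\<dots> = t2 - t1" using assms by simp
    finally show ?thesis .
  qed
  have m2: "(t2 + N - t1 - 1) mod N = t2 - t1 - 1"
  proof -
    have "(t2 + N - t1 - 1) mod N = ((t2 - t1 - 1) + N) mod N" by (simp only: e2)
    also have "\<dots> = (t2 - t1 - 1) mod N" by (rule mod_add_self2)
    also have "\<dots> = t2 - t1 - 1" using assms by simp
    finally show ?thesis .
  qed
  show ?thesis unfolding m1 m2 using lt by simp
qed

lemma f2: fixes t1 j N :: nat assumes "N > 0" "t1 < N" "j < N"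
  shows "(t1 + (j + N - t1) mod N) mod N = j"
  by (metis add_diff_inverse_nat assms(2,3)
    canonically_ordered_monoid_add_class.lessE mod_add_right_eq
    mod_add_self2 mod_if not_add_less2 trans_less_add1)

lemma f3: fixes t1 b N kk :: nat assumes "N > 0" "b < N" "kk = N - b"
  shows "nat ((int t1 - int kk) mod int N) = (t1 + b) mod N"
  by (smt (verit) assms(1,2,3) int_ops(5) mod_add_self1 nat_0_le
    nat_int_comparison(1) nat_less_le of_nat_0_less_iff of_nat_diff_if
    of_nat_mod pos_mod_sign)

lemma separation:
  fixes N n t1 t2 i j :: nat
  assumes n: "n \<ge> 1" and t1: "t1 < N" and t2: "t2 < N" and i: "i < N" and j: "j < N"
    and iA: "i \<in> cyc_open N t1 t2"
    and jA: "j \<notin> cyc_open N t1 t2" and jC: "j \<notin> cyc_boundary N n t1 t2"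
  shows "n < cyc_dist N i j"
proof -
  have N0: "N > 0" using t1 by simp
  define dd where "dd = (t2 + N - t1 - 1) mod N + 1"
  obtain \<alpha> where ia: "i = (t1 + \<alpha>) mod N" "0 < \<alpha>" "\<alpha> < dd"
    using iA unfolding cyc_open_def Let_def dd_def by blast
  define \<beta> where "\<beta> = (j + N - t1) mod N"
  have hb: "(t1 + \<beta>) mod N = j" unfolding \<beta>_def using f2[OF N0 t1 j] .
  have bN: "\<beta> < N" unfolding \<beta>_def using N0 by simp
  have b0: "\<beta> \<noteq> 0"
  proof
    assume "\<beta> = 0"
    then have "j = nat ((int t1 - int 0) mod int N)" using hb t1 by simp
    moreover have "(0::nat) < n" using n by simp
    ultimately have "j \<in> cyc_boundary N n t1 t2" unfolding cyc_boundary_def by blast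
    then show False using jC by simp
  qed
  have bA: "\<not> \<beta> < dd"
  proof
    assume "\<beta> < dd"
    then have "j \<in> cyc_open N t1 t2" unfolding cyc_open_def Let_def dd_def[symmetric]
      using hb b0 by blast
    then show False using jA by simp
  qed
  have t12: "t1 \<noteq> t2"
  proof
    assume "t1 = t2"
    then have "dd = N" unfolding dd_def using N0 by simp
    then show False using bA bN by simp
  qed
  define D2 where "D2 = (t2 + N - t1) mod N"
  have ddD: "dd = D2" unfolding dd_def D2_def using f5[OF N0 t1 t2 t12] .
  have bD: "D2 \<le> \<beta>" using bA ddD by simp
  have bB1: "\<beta> \<le> N - n"
  proof (rule ccontr)
    assume "\<not> \<beta> \<le> N - n"
    then have "N - \<beta> < n" using bN by simp
    moreover have "nat ((int t1 - int (N - \<beta>)) mod int N) = j" using f3[OF N0 bN refl, of t1] hb by simp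
    ultimately have "j \<in> cyc_boundary N n t1 t2" unfolding cyc_boundary_def by blast
    then show False using jC by simp
  qed
  have bB2: "D2 + n \<le> \<beta>"
  proof (rule ccontr)
    assume "\<not> D2 + n \<le> \<beta>"
    then have "\<beta> - D2 < n" using bD by simp
    moreover have "(t2 + (\<beta> - D2)) mod N = j" using f4[OF N0 t1 t2, of \<beta>] bD hb unfolding D2_def by simp
    ultimately have "j \<in> cyc_boundary N n t1 t2" unfolding cyc_boundary_def by blast
    then show False using jC by simp
  qed
  have aD: "\<alpha> < D2" using ia ddD by simp
  have e1: "(int j - int i) mod int N = int \<beta> - int \<alpha>"
  proof -
    have "(int j - int i) mod int N = (int \<beta> - int \<alpha>) mod int N"
      using f1[OF N0, of t1 \<beta> \<alpha>] hb ia(1) by simp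
    also have "\<dots> = int \<beta> - int \<alpha>" using aD bD bN by (intro mod_pos_pos_trivial) auto
    finally show ?thesis .
  qed
  have e2: "(int i - int j) mod int N = int \<alpha> - int \<beta> + int N"
  proof -
    have "(int i - int j) mod int N = (int \<alpha> - int \<beta>) mod int N"
      using f1[OF N0, of t1 \<alpha> \<beta>] hb ia(1) by simp
    also have "\<dots> = (int \<alpha> - int \<beta> + int N) mod int N" by simp
    also have "\<dots> = int \<alpha> - int \<beta> + int N" using aD bD bN ia(2) by (intro mod_pos_pos_trivial) auto
    finally show ?thesis .
  qed
  show ?thesis unfolding cyc_dist_def e1 e2 using aD bD bB1 bB2 ia(2) by auto
qed



lemma sp_unit:
  fixes S :: "real mat"
  assumes S: "S \<in> carrier_mat d d" and symS: "sym_mat S" and x: "x \<in> carrier_vec d" and z: "z < d"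
  shows "x \<bullet> (S *\<^sub>v unit_vec d z) = (S *\<^sub>v x) $ z"
proof -
  have "x \<bullet> (S *\<^sub>v unit_vec d z) = (\<Sum>i<d. x $ i * (\<Sum>j<d. S $$ (i,j) * unit_vec d z $ j))"
    using sp_mv[OF S _ x] by simp
  also have "\<dots> = (\<Sum>i<d. x $ i * S $$ (i,z))"
  proof (rule sum.cong[OF refl])
    fix i assume "i \<in> {..<d}"
    have "(\<Sum>j<d. S $$ (i,j) * unit_vec d z $ j) = (\<Sum>j<d. if j = z then S $$ (i,j) else 0)"
      by (intro sum.cong) (auto simp: unit_vec_def)
    also have "\<dots> = S $$ (i,z)" using z by simp
    finally show "x $ i * (\<Sum>j<d. S $$ (i,j) * unit_vec d z $ j) = x $ i * S $$ (i,z)" by simp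
  qed
  also have "\<dots> = (\<Sum>i<d. S $$ (z,i) * x $ i)"
    using sym_entry[OF symS S] z by (intro sum.cong) auto
  also have "\<dots> = (S *\<^sub>v x) $ z" using mv_entry[OF S x z] by simp
  finally show ?thesis .
qed

lemma reciprocal_from_banded:
  fixes S K :: "real mat"
  assumes m: "m \<ge> 1" and n: "n \<ge> 1" and N: "N \<ge> 1"
    and pd: "pos_def (m*N) S" and K: "K \<in> carrier_mat (m*N) (m*N)" and KS: "K * S = 1\<^sub>m (m*N)"
    and symK: "sym_mat K"
    and band: "\<forall>r<m*N. \<forall>c<m*N. n < cyc_dist N (r div m) (c div m) \<longrightarrow> K $$ (r,c) = 0"
  shows "reciprocal m N n S"
  unfolding reciprocal_def
proof (intro allI impI)
  fix t1 t2 assume t1: "t1 < N" and t2: "t2 < N"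
  let ?d = "m*N"
  let ?A = "cyc_open N t1 t2" and ?C = "cyc_boundary N n t1 t2"
  have S: "S \<in> carrier_mat ?d ?d" and symS: "sym_mat S" using pd unfolding pos_def_def by auto
  define al where "al = (\<lambda>z. z div m \<in> ?A \<and> z div m \<notin> ?C)"
  have sep: "K $$ (z,w) = 0 \<and> K $$ (w,z) = 0" if z: "z < ?d" "al z" and w: "w < ?d" "w div m \<notin> ?A" "w div m \<notin> ?C" for z w
  proof -
    have "n < cyc_dist N (z div m) (w div m)"
      using separation[OF n t1 t2 div_lt_N[OF z(1)] div_lt_N[OF w(1)]] z w unfolding al_def by blast
    then have "K $$ (z,w) = 0" using band z w by blast
    moreover have "K $$ (w,z) = K $$ (z,w)" using sym_entry[OF symK K z(1) w(1)] .
    ultimately show ?thesis by simp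
  qed
  show "cond_orth m N S ?A ({..<N} - ?A) ?C"
    unfolding cond_orth_def
  proof (intro ballI impI)
    fix u v p q
    assume u: "u \<in> span_times m N ?A" and v: "v \<in> span_times m N ({..<N} - ?A)"
      and p: "p \<in> span_times m N ?C" and q: "q \<in> span_times m N ?C"
      and hx: "\<forall>w\<in>span_times m N ?C. cov_inner S (u - p) w = 0"
      and hy: "\<forall>w\<in>span_times m N ?C. cov_inner S (v - q) w = 0"
    define x where "x = u - p"
    define y where "y = v - q"
    have uc: "u \<in> carrier_vec ?d" and vc: "v \<in> carrier_vec ?d" and pc: "p \<in> carrier_vec ?d" and qc: "q \<in> carrier_vec ?d"
      using u v p q unfolding span_times_def by auto
    have x: "x \<in> carrier_vec ?d" and y: "y \<in> carrier_vec ?d" unfolding x_def y_def using uc vc pc qc by auto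
    have x0: "x $ z = 0" if "z < ?d" "z div m \<notin> ?A" "z div m \<notin> ?C" for z
      using u p that uc pc unfolding x_def span_times_def by auto
    have y0: "y $ z = 0" if "z < ?d" "al z" for z
    proof -
      have "z div m \<notin> {..<N} - ?A" "z div m \<notin> ?C" using that unfolding al_def by auto
      then show ?thesis using v q that vc qc unfolding y_def span_times_def by auto
    qed
    define g where "g = S *\<^sub>v x"
    define h where "h = S *\<^sub>v y"
    have g: "g \<in> carrier_vec ?d" and h: "h \<in> carrier_vec ?d" unfolding g_def h_def using S x y by auto
    have unitC: "unit_vec ?d z \<in> span_times m N ?C" if "z < ?d" "z div m \<in> ?C" for z
      using that unfolding span_times_def by (auto simp: unit_vec_def)
    have g0: "g $ z = 0" if "z < ?d" "z div m \<in> ?C" for z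
      using hx unitC[OF that] sp_unit[OF S symS x that(1)] unfolding g_def cov_inner_def x_def by simp
    have h0: "h $ z = 0" if "z < ?d" "z div m \<in> ?C" for z
      using hy unitC[OF that] sp_unit[OF S symS y that(1)] unfolding h_def cov_inner_def y_def by simp
    have xK: "x = K *\<^sub>v g" unfolding g_def using assoc_mult_mat_vec[OF K S x, symmetric] KS x by simp
    have yK: "y = K *\<^sub>v h" unfolding h_def using assoc_mult_mat_vec[OF K S y, symmetric] KS y by simp
    have xz: "x $ z = (\<Sum>w<?d. if al w then K $$ (z,w) * g $ w else 0)" if z: "z < ?d" "al z" for z
    proof -
      have "x $ z = (\<Sum>w<?d. K $$ (z,w) * g $ w)" using xK mv_entry[OF K g z(1)] by simp
      also have "\<dots> = (\<Sum>w<?d. if al w then K $$ (z,w) * g $ w else 0)"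
      proof (rule sum.cong[OF refl])
        fix w assume "w \<in> {..<?d}"
        then have w: "w < ?d" by simp
        show "K $$ (z,w) * g $ w = (if al w then K $$ (z,w) * g $ w else 0)"
        proof (cases "al w")
          case False
          show ?thesis
          proof (cases "w div m \<in> ?C")
            case True then show ?thesis using g0 w by simp
          next
            case False2: False
            then have "w div m \<notin> ?A" using False unfolding al_def by simp
            then show ?thesis using sep[OF z w _ False2] False by simp
          qed
        qed simp
      qed
      finally show ?thesis .
    qed
    have yz: "(\<Sum>z<?d. if al z then K $$ (w,z) * h $ z else 0) = 0" if w: "w < ?d" "al w" for w
    proof -
      have "(\<Sum>z<?d. if al z then K $$ (w,z) * h $ z else 0) = (\<Sum>z<?d. K $$ (w,z) * h $ z)"
      proof (rule sum.cong[OF refl])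
        fix z assume "z \<in> {..<?d}"
        then have z: "z < ?d" by simp
        show "(if al z then K $$ (w,z) * h $ z else 0) = K $$ (w,z) * h $ z"
        proof (cases "al z")
          case False
          show ?thesis
          proof (cases "z div m \<in> ?C")
            case True then show ?thesis using h0 z by simp
          next
            case False2: False
            then have "z div m \<notin> ?A" using False unfolding al_def by simp
            then show ?thesis using sep[OF w z _ False2] False by simp
          qed
        qed simp
      qed
      also have "\<dots> = y $ w" using yK mv_entry[OF K h w(1)] by simp
      also have "\<dots> = 0" using y0 w by simp
      finally show ?thesis .
    qed
    have "cov_inner S (u - p) (v - q) = (\<Sum>z<?d. x $ z * h $ z)"
      unfolding cov_inner_def x_def[symmetric] y_def[symmetric] h_def[symmetric] using sp_sum[OF x h] .
    also have "\<dots> = (\<Sum>z<?d. if al z then x $ z * h $ z else 0)"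
    proof (rule sum.cong[OF refl])
      fix z assume "z \<in> {..<?d}"
      then have z: "z < ?d" by simp
      show "x $ z * h $ z = (if al z then x $ z * h $ z else 0)"
      proof (cases "al z")
        case False
        show ?thesis
        proof (cases "z div m \<in> ?C")
          case True then show ?thesis using h0 z by simp
        next
          case False2: False
          then have "z div m \<notin> ?A" using False unfolding al_def by simp
          then show ?thesis using x0[OF z _ False2] False by simp
        qed
      qed simp
    qed
    also have "\<dots> = (\<Sum>z<?d. \<Sum>w<?d. if al z \<and> al w then K $$ (z,w) * g $ w * h $ z else 0)"
    proof (rule sum.cong[OF refl])
      fix z assume "z \<in> {..<?d}"
      then have z: "z < ?d" by simp
      show "(if al z then x $ z * h $ z else 0) = (\<Sum>w<?d. if al z \<and> al w then K $$ (z,w) * g $ w * h $ z else 0)"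
      proof (cases "al z")
        case True
        have "x $ z * h $ z = (\<Sum>w<?d. (if al w then K $$ (z,w) * g $ w else 0) * h $ z)"
          unfolding xz[OF z True] by (simp add: sum_distrib_right)
        also have "\<dots> = (\<Sum>w<?d. if al z \<and> al w then K $$ (z,w) * g $ w * h $ z else 0)"
          using True by (intro sum.cong) auto
        finally show ?thesis using True by simp
      qed simp
    qed
    also have "\<dots> = (\<Sum>w<?d. \<Sum>z<?d. if al z \<and> al w then K $$ (z,w) * g $ w * h $ z else 0)"
      by (rule sum.swap)
    also have "\<dots> = (\<Sum>w<?d. if al w then g $ w * (\<Sum>z<?d. if al z then K $$ (w,z) * h $ z else 0) else 0)"
    proof (rule sum.cong[OF refl])
      fix w assume "w \<in> {..<?d}"
      then have w: "w < ?d" by simp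
      show "(\<Sum>z<?d. if al z \<and> al w then K $$ (z,w) * g $ w * h $ z else 0) =
        (if al w then g $ w * (\<Sum>z<?d. if al z then K $$ (w,z) * h $ z else 0) else 0)"
      proof (cases "al w")
        case True
        have "(\<Sum>z<?d. if al z \<and> al w then K $$ (z,w) * g $ w * h $ z else 0) =
              (\<Sum>z<?d. g $ w * (if al z then K $$ (w,z) * h $ z else 0))"
          using True sym_entry[OF symK K _ w] by (intro sum.cong) auto
        then show ?thesis using True by (simp add: sum_distrib_left)
      qed simp
    qed
    also have "\<dots> = 0" using yz by (intro sum.neutral) auto
    finally show "cov_inner S (u - p) (v - q) = 0" .
  qed
qed



theorem theorem7:
  fixes m n N :: nat and Sig :: "nat \<Rightarrow> real mat" and S :: "real mat"
  assumes "m \<ge> 1" and "n \<ge> 1" and "N > 2 * n"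
    and "\<forall>k \<le> n. Sig k \<in> carrier_mat m m"
    and "MEP_minimizer m N n Sig S"
  shows "(\<exists>Sinv. Sinv \<in> carrier_mat (m*N) (m*N) \<and> inverts_mat S Sinv \<and> inverts_mat Sinv S \<and>
            sym_mat Sinv \<and> block_circulant m N Sinv \<and> banded m N n Sinv)
         \<and> stationary_reciprocal_cov m N n S"
proof -
  note m = assms(1) and n = assms(2) and Nn = assms(3) and opt = assms(5)
  have N1: "N \<ge> 1" using Nn by simp
  have feas: "MEP_feasible m N n Sig S" using opt unfolding MEP_minimizer_def by simp
  then have pd: "pos_def (m*N) S" and circS: "transpose_mat (U_mat m N) * S * U_mat m N = S"
    unfolding MEP_feasible_def by auto
  have S: "S \<in> carrier_mat (m*N) (m*N)" using pd unfolding pos_def_def by auto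
  obtain K where K: "K \<in> carrier_mat (m*N) (m*N)" and SK: "S * K = 1\<^sub>m (m*N)" and KS: "K * S = 1\<^sub>m (m*N)"
    and symK: "sym_mat K" and circK: "transpose_mat (U_mat m N) * K * U_mat m N = K"
    using inverse_props[OF m N1 pd circS] by blast
  have band: "\<forall>r<m*N. \<forall>c<m*N. n < cyc_dist N (r div m) (c div m) \<longrightarrow> K $$ (r,c) = 0"
    using banded_entry[OF m n Nn opt K SK symK circK] by blast
  have part1: "\<exists>Sinv. Sinv \<in> carrier_mat (m*N) (m*N) \<and> inverts_mat S Sinv \<and> inverts_mat Sinv S \<and>
            sym_mat Sinv \<and> block_circulant m N Sinv \<and> banded m N n Sinv"
    using K SK KS symK circK band S unfolding inverts_mat_def block_circulant_def banded_def
    by (intro exI[of _ K]) auto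
  have psd: "pos_semidef (m*N) S"
    unfolding pos_semidef_def
  proof (intro conjI ballI)
    show "S \<in> carrier_mat (m*N) (m*N)" using S .
    show "sym_mat S" using pd unfolding pos_def_def by auto
  next
    fix v :: "real vec" assume v: "v \<in> carrier_vec (m*N)"
    show "0 \<le> v \<bullet> (S *\<^sub>v v)"
    proof (cases "v = 0\<^sub>v (m*N)")
      case True then show ?thesis using S by simp
    next
      case False then show ?thesis using pd v unfolding pos_def_def by (auto intro: less_imp_le)
    qed
  qed
  have rec: "reciprocal m N n S" using reciprocal_from_banded[OF m n N1 pd K KS symK band] .
  show ?thesis using part1 psd circS rec unfolding stationary_reciprocal_cov_def block_circulant_def by blast
qed

end
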